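(* Let $d>1$ and let $C\subseteq\{0,1\}^n$ be a maximum class of VC-dimension $d$. Then for every set $I\subseteq[n]$ of $d-1$ colors, the boundary $\partial C$ contains at least two $(d-1)$-cubes whose set of colors is $I$.
   Context: $C\subseteq\{0,1\}^n$ is maximum of VC-dimension $d$ if its VC-dimension is $d$ and $|C|=\sum_{i=0}^d\binom{n}{i}$. A $k$-cube in $C$ with colors $I$ ($|I|=k$) is a set of $2^k$ points of $C$ that agree outside the coordinates $I$ and take all $2^k$ values on $I$. The boundary $\partial C$ of a $d$-maximum class $C$ is the set of all $(d-1)$-cubes in $C$ that are faces of exactly one $d$-cube in $C$. *)

theory Defs
  imports Main
begin

text \<open>Points of {0,1}^n are represented as subsets of {..<n} (coordinate i is 1 iff i is in the set).
  A class C is a set of such points.\<close>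

definition shatters :: "nat set set \<Rightarrow> nat set \<Rightarrow> bool" where
  "shatters C S \<longleftrightarrow> (\<lambda>c. c \<inter> S) ` C = Pow S"

definition vc_dim_eq :: "nat \<Rightarrow> nat set set \<Rightarrow> nat \<Rightarrow> bool" where
  "vc_dim_eq n C d \<longleftrightarrow>
     (\<exists>S. S \<subseteq> {..<n} \<and> card S = d \<and> shatters C S) \<and>
     (\<forall>S. S \<subseteq> {..<n} \<longrightarrow> shatters C S \<longrightarrow> card S \<le> d)"

definition maximum_class :: "nat \<Rightarrow> nat \<Rightarrow> nat set set \<Rightarrow> bool" where
  "maximum_class n d C \<longleftrightarrow> C \<subseteq> Pow {..<n} \<and> vc_dim_eq n C d \<and>
     card C = (\<Sum>i\<le>d. n choose i)"

definition cube_in :: "nat \<Rightarrow> nat set set \<Rightarrow> nat set \<Rightarrow> nat set set \<Rightarrow> bool" where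
  "cube_in n C I Q \<longleftrightarrow> I \<subseteq> {..<n} \<and> Q \<subseteq> C \<and>
     (\<exists>x. x \<subseteq> {..<n} - I \<and> Q = {x \<union> J | J. J \<subseteq> I})"

definition boundary :: "nat \<Rightarrow> nat \<Rightarrow> nat set set \<Rightarrow> (nat set \<times> nat set set) set" where
  "boundary n d C = {(I, Q). cube_in n C I Q \<and> card I = d - 1 \<and>
     card {Q'. \<exists>I'. cube_in n C I' Q' \<and> card I' = d \<and> I \<subseteq> I' \<and> Q \<subseteq> Q'} = 1}"

end

theory Submission
  imports Defs
begin

definition vcle :: "nat set \<Rightarrow> nat set set \<Rightarrow> nat \<Rightarrow> bool" where
  "vcle U C d \<longleftrightarrow> (\<forall>S. S \<subseteq> U \<longrightarrow> shatters C S \<longrightarrow> card S \<le> d)"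

definition maxc :: "nat set \<Rightarrow> nat \<Rightarrow> nat set set \<Rightarrow> bool" where
  "maxc U d C \<longleftrightarrow> finite U \<and> C \<subseteq> Pow U \<and> vcle U C d \<and> card C = (\<Sum>i\<le>d. card U choose i)"

definition res :: "nat \<Rightarrow> nat set set \<Rightarrow> nat set set" where
  "res j C = (\<lambda>c. c - {j}) ` C"

definition red :: "nat \<Rightarrow> nat set set \<Rightarrow> nat set set" where
  "red j C = {c \<in> C. j \<notin> c \<and> insert j c \<in> C}"

lemma phi_Suc: "(\<Sum>i\<le>Suc d. Suc k choose i) = (\<Sum>i\<le>Suc d. k choose i) + (\<Sum>i\<le>d. (k::nat) choose i)"
proof -
  have "(\<Sum>i\<le>Suc d. Suc k choose i) = 1 + (\<Sum>i\<le>d. Suc k choose Suc i)"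
    by (subst sum.atMost_Suc_shift) simp
  also have "\<dots> = 1 + (\<Sum>i\<le>d. k choose i) + (\<Sum>i\<le>d. k choose Suc i)"
    by (simp add: sum.distrib)
  also have "(\<Sum>i\<le>Suc d. k choose i) = 1 + (\<Sum>i\<le>d. k choose Suc i)"
    by (subst sum.atMost_Suc_shift) simp
  ultimately show ?thesis by simp
qed

lemma phi_0: "(\<Sum>i\<le>d. (0::nat) choose i) = 1"
  by (induction d) auto

lemma shatters_iff: "shatters C S \<longleftrightarrow> (\<forall>T. T \<subseteq> S \<longrightarrow> (\<exists>c\<in>C. c \<inter> S = T))"
  unfolding shatters_def
proof
  assume h: "(\<lambda>c. c \<inter> S) ` C = Pow S"
  show "\<forall>T. T \<subseteq> S \<longrightarrow> (\<exists>c\<in>C. c \<inter> S = T)"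
  proof (intro allI impI)
    fix T assume "T \<subseteq> S"
    then have "T \<in> (\<lambda>c. c \<inter> S) ` C" using h by simp
    then show "\<exists>c\<in>C. c \<inter> S = T" by (auto simp: image_iff)
  qed
next
  assume h: "\<forall>T. T \<subseteq> S \<longrightarrow> (\<exists>c\<in>C. c \<inter> S = T)"
  show "(\<lambda>c. c \<inter> S) ` C = Pow S"
  proof (intro equalityI subsetI)
    fix T assume "T \<in> Pow S"
    then obtain c where "c \<in> C" "c \<inter> S = T" using h by auto
    then show "T \<in> (\<lambda>c. c \<inter> S) ` C" by (auto simp: image_iff)
  qed auto
qed

lemma res_shatters: "j \<notin> S \<Longrightarrow> shatters (res j C) S \<Longrightarrow> shatters C S"
proof -
  assume j: "j \<notin> S" and s: "shatters (res j C) S"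
  have "(\<lambda>c. c \<inter> S) ` res j C = (\<lambda>c. c \<inter> S) ` C"
    unfolding res_def image_image using j by (intro image_cong) auto
  with s show ?thesis unfolding shatters_def by simp
qed

lemma red_shatters: "j \<notin> S \<Longrightarrow> shatters (red j C) S \<Longrightarrow> shatters C (insert j S)"
  unfolding shatters_iff
proof (intro allI impI)
  fix T assume j: "j \<notin> S" and s: "\<forall>T. T \<subseteq> S \<longrightarrow> (\<exists>c\<in>red j C. c \<inter> S = T)" and T: "T \<subseteq> insert j S"
  then have "T - {j} \<subseteq> S" by auto
  with s obtain c where c: "c \<in> red j C" "c \<inter> S = T - {j}" by blast
  show "\<exists>c\<in>C. c \<inter> insert j S = T"
  proof (cases "j \<in> T")
    case True
    have "insert j c \<inter> insert j S = insert j (c \<inter> S)" by auto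
    also have "\<dots> = T" using c(2) True by auto
    finally show ?thesis using c(1) by (intro bexI[of _ "insert j c"]) (auto simp: red_def)
  next
    case False
    have "c \<inter> insert j S = c \<inter> S" using c(1) by (auto simp: red_def)
    then show ?thesis using c False by (intro bexI[of _ c]) (auto simp: red_def)
  qed
qed

lemma card_split:
  assumes "finite U" "C \<subseteq> Pow U"
  shows "card C = card (res j C) + card (red j C)"
proof -
  have finC: "finite C" using assms finite_subset by (metis finite_Pow_iff)
  define C0 where "C0 = {c \<in> C. j \<notin> c}"
  define C1 where "C1 = {c \<in> C. j \<in> c}"
  have f0: "finite C0" "finite C1" using finC C0_def C1_def by auto
  have "C = C0 \<union> C1" "C0 \<inter> C1 = {}" using C0_def C1_def by auto
  then have cC: "card C = card C0 + card C1" using f0 card_Un_disjoint by metis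
  have inj: "inj_on (\<lambda>c. c - {j}) C1"
    unfolding inj_on_def C1_def by (metis insert_Diff mem_Collect_eq)
  have cI: "card ((\<lambda>c. c - {j}) ` C1) = card C1" using card_image[OF inj] .
  have i0: "(\<lambda>c. c - {j}) ` C0 = C0"
  proof -
    have "(\<lambda>c. c - {j}) ` C0 = (\<lambda>c. c) ` C0"
      by (rule image_cong) (auto simp: C0_def)
    then show ?thesis by simp
  qed
  have r1: "res j C = C0 \<union> (\<lambda>c. c - {j}) ` C1"
    unfolding res_def using \<open>C = C0 \<union> C1\<close> i0 by (metis image_Un)
  have r2: "red j C = C0 \<inter> (\<lambda>c. c - {j}) ` C1"
  proof
    show "red j C \<subseteq> C0 \<inter> (\<lambda>c. c - {j}) ` C1"
    proof
      fix c assume "c \<in> red j C"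
      then have "c \<in> C" "j \<notin> c" "insert j c \<in> C" by (auto simp: red_def)
      then show "c \<in> C0 \<inter> (\<lambda>c. c - {j}) ` C1" unfolding C0_def C1_def
        by (auto intro!: image_eqI[of _ _ "insert j c"])
    qed
  next
    show "C0 \<inter> (\<lambda>c. c - {j}) ` C1 \<subseteq> red j C"
      unfolding C0_def C1_def red_def by (auto simp: insert_absorb)
  qed
  have "card C0 + card ((\<lambda>c. c - {j}) ` C1) = card (C0 \<union> (\<lambda>c. c - {j}) ` C1) + card (C0 \<inter> (\<lambda>c. c - {j}) ` C1)"
    using f0 by (intro card_Un_Int) auto
  then show ?thesis using cC cI r1 r2 by simp
qed

lemma res_props:
  assumes "j \<notin> U" "C \<subseteq> Pow (insert j U)" "vcle (insert j U) C d"
  shows "res j C \<subseteq> Pow U" "vcle U (res j C) d"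
proof -
  show "res j C \<subseteq> Pow U" using assms(2) unfolding res_def by auto
  show "vcle U (res j C) d" unfolding vcle_def
  proof (intro allI impI)
    fix S assume "S \<subseteq> U" "shatters (res j C) S"
    then have "j \<notin> S" "shatters C S" using assms(1) res_shatters by auto
    then show "card S \<le> d" using assms(3) \<open>S \<subseteq> U\<close> unfolding vcle_def by blast
  qed
qed

lemma red_props:
  assumes "finite U" "j \<notin> U" "C \<subseteq> Pow (insert j U)" "vcle (insert j U) C d"
  shows "red j C \<subseteq> Pow U" "vcle U (red j C) (d - 1)"
proof -
  show "red j C \<subseteq> Pow U" using assms(3) unfolding red_def by auto
  show "vcle U (red j C) (d - 1)" unfolding vcle_def
  proof (intro allI impI)
    fix S assume S: "S \<subseteq> U" "shatters (red j C) S"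
    then have "j \<notin> S" using assms(2) by auto
    then have "shatters C (insert j S)" using red_shatters S by auto
    then have "card (insert j S) \<le> d" using assms(4) S unfolding vcle_def by blast
    moreover have "finite S" using S assms(1) finite_subset by blast
    ultimately show "card S \<le> d - 1" using \<open>j \<notin> S\<close> by simp
  qed
qed

lemma sauer: "finite U \<Longrightarrow> C \<subseteq> Pow U \<Longrightarrow> vcle U C d \<Longrightarrow> card C \<le> (\<Sum>i\<le>d. card U choose i)"
proof (induction U arbitrary: C d rule: finite_induct)
  case empty
  then have "C \<subseteq> {{}}" by auto
  then have "card C \<le> 1" using card_mono[of "{{}}" C] by simp
  then show ?case by (simp add: phi_0)
next
  case (insert j U)
  have split: "card C = card (res j C) + card (red j C)"
    using card_split[of "insert j U" C j] insert.hyps insert.prems(1) by simp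
  note rp = res_props[OF insert.hyps(2) insert.prems]
  note dp = red_props[OF insert.hyps(1,2) insert.prems]
  have r1: "card (res j C) \<le> (\<Sum>i\<le>d. card U choose i)" using insert.IH rp by blast
  show ?case
  proof (cases d)
    case 0
    have "red j C = {}"
    proof (rule ccontr)
      assume "red j C \<noteq> {}"
      then have "shatters (red j C) {}" by (auto simp: shatters_def)
      then have "shatters C {j}" using red_shatters[of j "{}"] by simp
      then have "card {j} \<le> d" using insert.prems(2) unfolding vcle_def by auto
      with 0 show False by simp
    qed
    then show ?thesis using split r1 0 insert.hyps by simp
  next
    case (Suc d')
    have r2: "card (red j C) \<le> (\<Sum>i\<le>d'. card U choose i)" using insert.IH dp Suc by simp
    have ph: "(\<Sum>i\<le>Suc d'. Suc (card U) choose i) = (\<Sum>i\<le>Suc d'. card U choose i) + (\<Sum>i\<le>d'. card U choose i)"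
      by (rule phi_Suc)
    have ci: "card (insert j U) = Suc (card U)" using insert.hyps by simp
    have e: "(\<Sum>i\<le>d. card (insert j U) choose i) = (\<Sum>i\<le>Suc d'. card U choose i) + (\<Sum>i\<le>d'. card U choose i)"
      unfolding ci Suc by (rule ph)
    have r1': "card (res j C) \<le> (\<Sum>i\<le>Suc d'. card U choose i)" using r1 unfolding Suc .
    show ?thesis unfolding e using split r1' r2 by linarith
  qed
qed

lemma red_max:
  assumes "maxc (insert j U) d C" "j \<notin> U" "d \<ge> 1"
  shows "maxc U (d - 1) (red j C)"
proof -
  have fU: "finite U" and CP: "C \<subseteq> Pow (insert j U)" and v: "vcle (insert j U) C d"
    and cC: "card C = (\<Sum>i\<le>d. card (insert j U) choose i)"
    using assms(1) unfolding maxc_def by auto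
  obtain d' where d: "d = Suc d'" using assms(3) by (cases d) auto
  have split: "card C = card (res j C) + card (red j C)"
    using card_split[OF _ CP] fU by simp
  note rp = res_props[OF assms(2) CP v]
  note dp = red_props[OF fU assms(2) CP v]
  have r1: "card (res j C) \<le> (\<Sum>i\<le>d. card U choose i)" using sauer fU rp by blast
  have r2: "card (red j C) \<le> (\<Sum>i\<le>d'. card U choose i)" using sauer fU dp d by simp
  have ph: "(\<Sum>i\<le>Suc d'. Suc (card U) choose i) = (\<Sum>i\<le>Suc d'. card U choose i) + (\<Sum>i\<le>d'. card U choose i)"
    by (rule phi_Suc)
  have ci: "card (insert j U) = Suc (card U)" using fU assms(2) by simp
  have "card C = (\<Sum>i\<le>d. card U choose i) + (\<Sum>i\<le>d'. card U choose i)"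
    unfolding cC ci d by (rule ph)
  then have "card (red j C) = (\<Sum>i\<le>d'. card U choose i)" using split r1 r2 by linarith
  then show ?thesis using fU dp d unfolding maxc_def by simp
qed

lemma strong:
  "finite S \<Longrightarrow> \<forall>U d C. maxc U d C \<longrightarrow> S \<subseteq> U \<longrightarrow> card S \<le> d \<longrightarrow>
     (\<exists>x. x \<subseteq> U - S \<and> (\<forall>J. J \<subseteq> S \<longrightarrow> x \<union> J \<in> C))"
proof (induction S rule: finite_induct)
  case empty
  show ?case
  proof (intro allI impI)
    fix U d C assume m: "maxc U d C"
    have "card U choose 0 \<le> (\<Sum>i\<le>d. card U choose i)" by (rule member_le_sum) auto
    then have "card C \<ge> 1" using m unfolding maxc_def by simp
    then obtain x where "x \<in> C" by fastforce
    with m show "\<exists>x. x \<subseteq> U - {} \<and> (\<forall>J. J \<subseteq> {} \<longrightarrow> x \<union> J \<in> C)" by (auto simp: maxc_def)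
  qed
next
  case (insert j S)
  show ?case
  proof (intro allI impI)
    fix U d C assume m: "maxc U d C" and sub: "insert j S \<subseteq> U" and cd: "card (insert j S) \<le> d"
    define U' where "U' = U - {j}"
    have U: "U = insert j U'" "j \<notin> U'" using sub U'_def by auto
    have d1: "d \<ge> 1" using cd insert.hyps by simp
    have "maxc (insert j U') d C" using m U(1) by simp
    then have m': "maxc U' (d - 1) (red j C)" using red_max U(2) d1 by blast
    have "S \<subseteq> U'" using sub insert.hyps(2) U'_def by auto
    moreover have "card S \<le> d - 1" using cd insert.hyps by simp
    ultimately obtain x where x: "x \<subseteq> U' - S" "\<forall>J. J \<subseteq> S \<longrightarrow> x \<union> J \<in> red j C"
      using insert.IH[rule_format, OF m'] by blast
    show "\<exists>x. x \<subseteq> U - insert j S \<and> (\<forall>J. J \<subseteq> insert j S \<longrightarrow> x \<union> J \<in> C)"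
    proof (intro exI conjI allI impI)
      show "x \<subseteq> U - insert j S" using x(1) U'_def by auto
      fix J assume J: "J \<subseteq> insert j S"
      show "x \<union> J \<in> C"
      proof (cases "j \<in> J")
        case True
        have "J - {j} \<subseteq> S" using J by auto
        then have "x \<union> (J - {j}) \<in> red j C" using x(2) by blast
        then have "insert j (x \<union> (J - {j})) \<in> C" by (simp add: red_def)
        moreover have "insert j (x \<union> (J - {j})) = x \<union> J" using True by auto
        ultimately show ?thesis by simp
      next
        case False
        then have "J \<subseteq> S" using J by auto
        then show ?thesis using x(2) by (auto simp: red_def)
      qed
    qed
  qed
qed


definition nb :: "nat set \<Rightarrow> nat set set \<Rightarrow> nat set \<Rightarrow> nat set" where
  "nb R D x = {j \<in> R. x - {j} \<in> D \<and> insert j x \<in> D}"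

definition uniq_edges :: "nat set \<Rightarrow> nat set set \<Rightarrow> bool" where
  "uniq_edges R D \<longleftrightarrow> (\<forall>j\<in>R. \<forall>y z. y \<in> D \<longrightarrow> z \<in> D \<longrightarrow> j \<notin> y \<longrightarrow> j \<notin> z \<longrightarrow>
      insert j y \<in> D \<longrightarrow> insert j z \<in> D \<longrightarrow> y = z)"

lemma uniq_mono:
  assumes "uniq_edges R D" "D' \<subseteq> D" shows "uniq_edges R D'"
  unfolding uniq_edges_def
proof (intro ballI allI impI)
  fix j y z assume h: "j\<in>R" "y \<in> D'" "z \<in> D'" "j\<notin>y" "j\<notin>z" "insert j y \<in> D'" "insert j z \<in> D'"
  have "y \<in> D" "z \<in> D" "insert j y \<in> D" "insert j z \<in> D" using h assms(2) by auto
  then show "y = z" using assms(1)[unfolded uniq_edges_def, rule_format, of j y z] h by blast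
qed

lemma uniq_use:
  assumes "uniq_edges R D" "a \<in> R" "w - {a} \<in> D" "insert a w \<in> D" "u - {a} \<in> D" "insert a u \<in> D"
    "(a \<in> w) = (a \<in> u)"
  shows "w = u"
proof -
  have "insert a (w - {a}) \<in> D" "insert a (u - {a}) \<in> D" using assms(4,6) by simp_all
  then have e: "w - {a} = u - {a}"
    using assms(1)[unfolded uniq_edges_def, rule_format, of a "w - {a}" "u - {a}"] assms(2,3,5) by blast
  show "w = u"
  proof (rule set_eqI)
    fix x show "x \<in> w \<longleftrightarrow> x \<in> u"
    proof (cases "x = a")
      case True then show ?thesis using assms(7) by simp
    next
      case False then show ?thesis using e by blast
    qed
  qed
qed

lemma nb_restrict:
  assumes "x \<in> D'" "D' = {x \<in> D. (a \<in> x) = (a \<in> u)}"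
  shows "nb R D' x = nb R D x - {a}"
proof (rule set_eqI)
  fix j show "j \<in> nb R D' x \<longleftrightarrow> j \<in> nb R D x - {a}"
  proof (cases "j = a")
    case True
    then show ?thesis using assms unfolding nb_def by auto
  next
    case False
    have "(a \<in> x - {j}) = (a \<in> x)" "(a \<in> insert j x) = (a \<in> x)" using False by auto
    then show ?thesis using assms False unfolding nb_def by auto
  qed
qed

lemma leaf:
  "finite R \<Longrightarrow> finite D \<Longrightarrow> uniq_edges R D \<Longrightarrow> v \<in> D \<Longrightarrow> nb R D v \<noteq> {} \<Longrightarrow>
   \<exists>w\<in>D. w \<noteq> v \<and> card (nb R D w) = 1"
proof (induction "card D" arbitrary: D v rule: less_induct)
  case less
  obtain a where a: "a \<in> nb R D v" using less.prems(5) by blast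
  then have aR: "a \<in> R" and va1: "v - {a} \<in> D" and va2: "insert a v \<in> D" unfolding nb_def by auto
  define u where "u = (if a \<in> v then v - {a} else insert a v)"
  have uD: "u \<in> D" using va1 va2 u_def by simp
  have uv: "u \<noteq> v" "(a \<in> u) = (a \<notin> v)" using u_def by auto
  have ua1: "u - {a} \<in> D" "insert a u \<in> D"
  proof -
    show "u - {a} \<in> D"
    proof (cases "a \<in> v")
      case True then show ?thesis using va1 u_def by simp
    next
      case False then have "insert a v - {a} = v" by simp
      then show ?thesis using less.prems(4) u_def False by simp
    qed
    show "insert a u \<in> D"
    proof (cases "a \<in> v")
      case True then have "insert a (v - {a}) = v" by auto
      then show ?thesis using less.prems(4) u_def True by simp
    next
      case False then show ?thesis using va2 u_def by simp
    qed
  qed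
  have au: "a \<in> nb R D u" using aR ua1 unfolding nb_def by simp
  show ?case
  proof (cases "card (nb R D u) = 1")
    case True
    then show ?thesis using uD uv by blast
  next
    case False
    define D' where "D' = {x \<in> D. (a \<in> x) = (a \<in> u)}"
    have nbD': "nb R D' x = nb R D x - {a}" if "x \<in> D'" for x
      using nb_restrict[OF that D'_def] .
    have "v \<notin> D'" using uv D'_def by auto
    then have D'sub: "D' \<subset> D" using less.prems(4) D'_def by auto
    then have cD': "card D' < card D" using less.prems(2) psubset_card_mono by blast
    have fD': "finite D'" using D'sub less.prems(2) finite_subset by blast
    have ue': "uniq_edges R D'" using uniq_mono[OF less.prems(3)] D'sub by blast
    have uD': "u \<in> D'" using uD D'_def by auto
    have "nb R D u - {a} \<noteq> {}"
    proof
      assume "nb R D u - {a} = {}"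
      then have "nb R D u = {a}" using au by blast
      with False show False by simp
    qed
    then have "nb R D' u \<noteq> {}" using nbD'[OF uD'] by simp
    then obtain w where w: "w \<in> D'" "w \<noteq> u" "card (nb R D' w) = 1"
      using less.hyps[OF cD' less.prems(1) fD' ue' uD'] by blast
    have "a \<notin> nb R D w"
    proof
      assume "a \<in> nb R D w"
      then have "w - {a} \<in> D" "insert a w \<in> D" unfolding nb_def by auto
      moreover have "(a \<in> w) = (a \<in> u)" using w(1) D'_def by auto
      ultimately have "w = u" using uniq_use[OF less.prems(3) aR _ _ ua1] by blast
      with w(2) show False by simp
    qed
    then have "nb R D w = nb R D' w" using nbD'[OF w(1)] by auto
    moreover have "w \<noteq> v" using w(1) \<open>v \<notin> D'\<close> by auto
    moreover have "w \<in> D" using w(1) D'_def by auto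
    ultimately show ?thesis using w(3) by auto
  qed
qed

lemma leaf_bnd:
  assumes d: "d > 1" and Isub: "I \<subseteq> {..<n}" and cI: "card I = d - 1"
    and R: "R = {..<n} - I" and D: "D = {x. x \<subseteq> R \<and> (\<forall>J. J \<subseteq> I \<longrightarrow> x \<union> J \<in> C)}"
    and wD: "w \<in> D" and cw: "card (nb R D w) = 1"
  shows "(I, {w \<union> J | J. J \<subseteq> I}) \<in> boundary n d C"
proof -
  have finI: "finite I" using Isub finite_subset by blast
  obtain j1 where nbw: "nb R D w = {j1}" using cw card_1_singletonE by blast
  then have j1: "j1 \<in> R" "w - {j1} \<in> D" "insert j1 w \<in> D" unfolding nb_def by auto
  have wR: "w \<subseteq> R" "\<forall>J. J \<subseteq> I \<longrightarrow> w \<union> J \<in> C" using wD D by auto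
  let ?Q = "{w \<union> J | J. J \<subseteq> I}"
  define F where "F = {(w - {j1}) \<union> J | J. J \<subseteq> insert j1 I}"
  have cube: "cube_in n C I ?Q" unfolding cube_in_def
    using Isub wR R by blast
  have wQ: "w \<in> ?Q" by (auto intro!: exI[of _ "{}"])
  have set_eq: "{Q'. \<exists>I'. cube_in n C I' Q' \<and> card I' = d \<and> I \<subseteq> I' \<and> ?Q \<subseteq> Q'} = {F}"
  proof (intro equalityI subsetI)
    fix Q' assume "Q' \<in> {Q'. \<exists>I'. cube_in n C I' Q' \<and> card I' = d \<and> I \<subseteq> I' \<and> ?Q \<subseteq> Q'}"
    then obtain I' y where I': "I' \<subseteq> {..<n}" "Q' \<subseteq> C" "y \<subseteq> {..<n} - I'"
      "Q' = {y \<union> J | J. J \<subseteq> I'}" "card I' = d" "I \<subseteq> I'" "?Q \<subseteq> Q'"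
      unfolding cube_in_def by blast
    have finI': "finite I'" using I'(1) finite_subset by blast
    have "card (I' - I) = 1" using card_Diff_subset[OF finI I'(6)] I'(5) cI d by simp
    then obtain j where Ij: "I' - I = {j}" using card_1_singletonE by blast
    have I'eq: "I' = insert j I" using Ij I'(6) by auto
    have jR: "j \<in> R" using Ij I'(1) R by auto
    have "w \<in> Q'" using I'(7) wQ by blast
    then obtain J0 where J0: "w = y \<union> J0" "J0 \<subseteq> I'" using I'(4) by blast
    have yeq: "y = w - {j}"
      using J0 I'(3) I'eq wR(1) R by blast
    have QF: "Q' = {(w - {j}) \<union> J | J. J \<subseteq> insert j I}" using I'(4) yeq I'eq by simp
    have "w - {j} \<in> D"
    proof -
      have "(w - {j}) \<union> J \<in> C" if "J \<subseteq> I" for J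
        using that QF I'(2) by blast
      then show ?thesis using D wR(1) by auto
    qed
    moreover have "insert j w \<in> D"
    proof -
      have "(insert j w) \<union> J \<in> C" if "J \<subseteq> I" for J
      proof -
        have "(insert j w) \<union> J = (w - {j}) \<union> insert j J" by auto
        moreover have "insert j J \<subseteq> insert j I" using that by auto
        ultimately show ?thesis using QF I'(2) by blast
      qed
      then show ?thesis using D wR(1) jR by auto
    qed
    ultimately have "j \<in> nb R D w" using jR unfolding nb_def by auto
    then have "j = j1" using nbw by auto
    then show "Q' \<in> {F}" using QF F_def by simp
  next
    fix Q' assume "Q' \<in> {F}"
    then have QF: "Q' = F" by simp
    have j1I: "j1 \<notin> I" using j1(1) R by auto
    have "cube_in n C (insert j1 I) F" unfolding cube_in_def
    proof (intro conjI)
      show "insert j1 I \<subseteq> {..<n}" using j1(1) R Isub by auto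
      show "F \<subseteq> C"
      proof
        fix c assume "c \<in> F"
        then obtain J where J: "c = (w - {j1}) \<union> J" "J \<subseteq> insert j1 I" using F_def by blast
        show "c \<in> C"
        proof (cases "j1 \<in> J")
          case True
          then have "c = insert j1 w \<union> (J - {j1})" using J(1) by auto
          moreover have "J - {j1} \<subseteq> I" using J(2) by auto
          ultimately show ?thesis using j1(3) D by auto
        next
          case False
          then have "J \<subseteq> I" using J(2) by auto
          then show ?thesis using j1(2) D J(1) by auto
        qed
      qed
      show "\<exists>x. x \<subseteq> {..<n} - insert j1 I \<and> F = {x \<union> J |J. J \<subseteq> insert j1 I}"
        using F_def wR(1) R by (intro exI[of _ "w - {j1}"]) auto
    qed
    moreover have "card (insert j1 I) = d" using j1I finI cI d by simp
    moreover have "?Q \<subseteq> F"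
    proof
      fix c assume "c \<in> ?Q"
      then obtain J where J: "c = w \<union> J" "J \<subseteq> I" by blast
      have "c = (w - {j1}) \<union> (J \<union> (w \<inter> {j1}))" using J(1) by auto
      moreover have "J \<union> (w \<inter> {j1}) \<subseteq> insert j1 I" using J(2) by auto
      ultimately show "c \<in> F" using F_def by blast
    qed
    ultimately show "Q' \<in> {Q'. \<exists>I'. cube_in n C I' Q' \<and> card I' = d \<and> I \<subseteq> I' \<and> ?Q \<subseteq> Q'}"
      using QF by blast
  qed
  show ?thesis unfolding boundary_def using cube cI set_eq by simp
qed

theorem theorem2:
  fixes n d :: nat and C :: "nat set set"
  assumes "d > 1" and "maximum_class n d C"
  shows "\<forall>I. I \<subseteq> {..<n} \<and> card I = d - 1 \<longrightarrow>
           (\<exists>Q1 Q2. Q1 \<noteq> Q2 \<and> (I, Q1) \<in> boundary n d C \<and> (I, Q2) \<in> boundary n d C)"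
proof (intro allI impI)
  fix I assume "I \<subseteq> {..<n} \<and> card I = d - 1"
  then have Isub: "I \<subseteq> {..<n}" and cI: "card I = d - 1" by auto
  have finI: "finite I" using Isub finite_subset by blast
  from assms(2) have Csub: "C \<subseteq> Pow {..<n}" and vc: "vc_dim_eq n C d"
    and cC: "card C = (\<Sum>i\<le>d. n choose i)" unfolding maximum_class_def by auto
  from vc obtain S0 where "S0 \<subseteq> {..<n}" "card S0 = d" unfolding vc_dim_eq_def by blast
  then have dn: "d \<le> n" using card_mono[of "{..<n}" S0] by simp
  have vcl: "vcle {..<n} C d" using vc unfolding vc_dim_eq_def vcle_def by blast
  have mx: "maxc {..<n} d C" using Csub vcl cC unfolding maxc_def by simp
  define R where "R = {..<n} - I"
  have "R \<noteq> {}"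
  proof
    assume "R = {}"
    then have "{..<n} \<subseteq> I" using R_def by auto
    then have "card {..<n} \<le> card I" by (rule card_mono[OF finI])
    then have "n \<le> card I" by simp
    with cI dn assms(1) show False by simp
  qed
  then obtain j0 where j0: "j0 \<in> R" by auto
  have j0I: "j0 \<notin> I" using j0 R_def by auto
  have c0: "card (insert j0 I) \<le> d" using j0I finI cI assms(1) by simp
  have s0: "insert j0 I \<subseteq> {..<n}" using j0 R_def Isub by auto
  have f0: "finite (insert j0 I)" using finI by simp
  obtain x0 where x0: "x0 \<subseteq> {..<n} - insert j0 I" "\<forall>J. J \<subseteq> insert j0 I \<longrightarrow> x0 \<union> J \<in> C"
    using strong[OF f0, rule_format, OF mx s0 c0] by blast
  define D where "D = {x. x \<subseteq> R \<and> (\<forall>J. J \<subseteq> I \<longrightarrow> x \<union> J \<in> C)}"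
  have x0D: "x0 \<in> D"
  proof -
    have "x0 \<subseteq> R" using x0(1) unfolding R_def by auto
    moreover have "\<forall>J. J \<subseteq> I \<longrightarrow> x0 \<union> J \<in> C" using x0(2) by blast
    ultimately show ?thesis unfolding D_def by simp
  qed
  have x1D: "insert j0 x0 \<in> D"
  proof -
    have "insert j0 x0 \<union> J \<in> C" if "J \<subseteq> I" for J
    proof -
      have e: "insert j0 x0 \<union> J = x0 \<union> insert j0 J" by auto
      have "insert j0 J \<subseteq> insert j0 I" using that by auto
      then have "x0 \<union> insert j0 J \<in> C" using x0(2) by blast
      then show ?thesis by (simp only: e)
    qed
    then have "\<forall>J. J \<subseteq> I \<longrightarrow> insert j0 x0 \<union> J \<in> C" by blast
    moreover have "insert j0 x0 \<subseteq> R" using x0(1) j0 unfolding R_def by auto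
    ultimately show ?thesis unfolding D_def by simp
  qed
  have "x0 - {j0} = x0" using x0(1) by auto
  then have nb0: "j0 \<in> nb R D x0" using x0D x1D j0 unfolding nb_def by auto
  have finR: "finite R" using R_def by simp
  have "D \<subseteq> Pow R" unfolding D_def by blast
  moreover have "finite (Pow R)" using finR by simp
  ultimately have finD: "finite D" by (rule finite_subset)
  have vcle_d: "\<And>S. S \<subseteq> {..<n} \<Longrightarrow> shatters C S \<Longrightarrow> card S \<le> d" using vcl unfolding vcle_def by blast
  have contra: False if k: "k \<in> y1" "k \<notin> y2" and j: "j \<in> R"
    and yy: "y1 \<in> D" "y2 \<in> D" "j \<notin> y1" "j \<notin> y2" "insert j y1 \<in> D" "insert j y2 \<in> D"
    for j k y1 y2
  proof -
    have yR: "y1 \<subseteq> R" "y2 \<subseteq> R" using yy(1,2) unfolding D_def by auto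
    have kR: "k \<in> R" using k(1) yR(1) by auto
    have kj: "k \<noteq> j" using k(1) yy(3) by auto
    define S where "S = insert j (insert k I)"
    have Ssub: "S \<subseteq> {..<n}" using j kR Isub unfolding S_def R_def by auto
    have jI: "j \<notin> I" "k \<notin> I" using j kR unfolding R_def by auto
    have cS: "card S = d + 1" using jI kj finI cI assms(1) unfolding S_def by simp
    have "shatters C S" unfolding shatters_iff
    proof (intro allI impI)
      fix T assume T: "T \<subseteq> S"
      define b where "b = (if k \<in> T then y1 else y2)"
      define b' where "b' = (if j \<in> T then insert j b else b)"
      have bD: "b \<in> D" "insert j b \<in> D" unfolding b_def using yy by auto
      have b'D: "b' \<in> D" unfolding b'_def using bD by auto
      have bR: "b \<subseteq> R" "j \<notin> b" "(k \<in> b) = (k \<in> T)" unfolding b_def using yR yy(3,4) k by auto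
      have b'1: "(j \<in> b') = (j \<in> T)" "(k \<in> b') = (k \<in> T)" unfolding b'_def using bR kj by auto
      have b'2: "b' \<inter> I = {}" unfolding b'_def using bR jI unfolding R_def by auto
      have "b' \<union> (T \<inter> I) \<in> C" using b'D unfolding D_def by auto
      moreover have "(b' \<union> (T \<inter> I)) \<inter> S = T"
      proof (rule set_eqI)
        fix e show "e \<in> (b' \<union> (T \<inter> I)) \<inter> S \<longleftrightarrow> e \<in> T"
        proof (cases "e = j")
          case True then show ?thesis using b'1 unfolding S_def by auto
        next
          case False
          show ?thesis
          proof (cases "e = k")
            case True then show ?thesis using b'1 unfolding S_def by auto
          next
            case False2: False
            show ?thesis
            proof (cases "e \<in> I")
              case True then show ?thesis using b'2 unfolding S_def by auto
            next
              case False3: False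
              then show ?thesis using False False2 T unfolding S_def by auto
            qed
          qed
        qed
      qed
      ultimately show "\<exists>c\<in>C. c \<inter> S = T" by blast
    qed
    then have "card S \<le> d" using vcle_d Ssub by blast
    with cS show False by simp
  qed
  have ue: "uniq_edges R D" unfolding uniq_edges_def
  proof (intro ballI allI impI)
    fix j y z assume j: "j \<in> R" and h: "y \<in> D" "z \<in> D" "j \<notin> y" "j \<notin> z" "insert j y \<in> D" "insert j z \<in> D"
    show "y = z"
    proof (rule ccontr)
      assume "y \<noteq> z"
      then obtain k where "(k \<in> y \<and> k \<notin> z) \<or> (k \<in> z \<and> k \<notin> y)" by blast
      then show False
      proof
        assume "k \<in> y \<and> k \<notin> z"
        then show False using contra[of k y z j] j h by blast
      next
        assume "k \<in> z \<and> k \<notin> y"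
        then show False using contra[of k z y j] j h by blast
      qed
    qed
  qed
  have nbne: "nb R D x0 \<noteq> {}" using nb0 by blast
  obtain w1 where w1: "w1 \<in> D" "w1 \<noteq> x0" "card (nb R D w1) = 1"
    using leaf[OF finR finD ue x0D nbne] by blast
  then have "nb R D w1 \<noteq> {}" by auto
  then obtain w2 where w2: "w2 \<in> D" "w2 \<noteq> w1" "card (nb R D w2) = 1"
    using leaf[OF finR finD ue w1(1)] by blast
  have b1: "(I, {w1 \<union> J | J. J \<subseteq> I}) \<in> boundary n d C"
    using leaf_bnd[OF assms(1) Isub cI R_def D_def w1(1) w1(3)] .
  have b2: "(I, {w2 \<union> J | J. J \<subseteq> I}) \<in> boundary n d C"
    using leaf_bnd[OF assms(1) Isub cI R_def D_def w2(1) w2(3)] .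
  have ne: "{w2 \<union> J | J. J \<subseteq> I} \<noteq> {w1 \<union> J | J. J \<subseteq> I}"
  proof
    assume eq: "{w2 \<union> J | J. J \<subseteq> I} = {w1 \<union> J | J. J \<subseteq> I}"
    have "w2 \<in> {w2 \<union> J | J. J \<subseteq> I}" by (auto intro!: exI[of _ "{}"])
    then have "w2 \<in> {w1 \<union> J | J. J \<subseteq> I}" by (simp only: eq)
    then have "\<exists>J. w2 = w1 \<union> J \<and> J \<subseteq> I" by (simp only: mem_Collect_eq)
    then obtain J where J: "w2 = w1 \<union> J" "J \<subseteq> I" by (elim exE conjE)
    have "w2 \<subseteq> R" using w2(1) D_def by auto
    then have "J = {}" using J R_def by auto
    with J w2(2) show False by simp
  qed
  show "\<exists>Q1 Q2. Q1 \<noteq> Q2 \<and> (I, Q1) \<in> boundary n d C \<and> (I, Q2) \<in> boundary n d C"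
    by (rule exI[of _ "{w2 \<union> J | J. J \<subseteq> I}"], rule exI[of _ "{w1 \<union> J | J. J \<subseteq> I}"])
      (intro conjI ne b2 b1)
qed

end
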